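(* Let $\Gamma\Rightarrow F$ be a binary tautological $\to$-sequent, and let $\Delta$ be the result of deleting from $\Gamma$ all irrelevant formulas of $\Gamma\Rightarrow F$. Then the sequent $\Delta\Rightarrow F$ is also tautological (and binary).
   Context: $\to$-formulas are built from propositional atoms with binary $\to$; a $\to$-sequent is $\Gamma\Rightarrow F$ with $\Gamma$ a finite multiset of $\to$-formulas and $F$ a $\to$-formula. A sequent $E_1,\dots,E_n\Rightarrow F$ is identified with the classical formula $E_1\wedge\dots\wedge E_n\to F$ for the purposes of being true (under a truth assignment), tautological, or binary; binary means no atom occurs more than twice. The head of a $\to$-formula is defined by: an atom is its own head; the head of $E\to F$ is the head of $F$. For a binary sequent $\Gamma\Rightarrow F$, the relevant formulas are the elements of the smallest set $S$ such that (1) every formula of $\Gamma$ whose head occurs in $F$ is in $S$, and (2) every formula of $\Gamma$ whose head occurs in some element of $S$ is in $S$. Formulas of $\Gamma$ that are not relevant are irrelevant. *)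

theory Defs
  imports Main "HOL-Library.Multiset"
begin

datatype 'a form = Atom 'a | Imp "'a form" "'a form"

fun tval :: "('a \<Rightarrow> bool) \<Rightarrow> 'a form \<Rightarrow> bool" where
  "tval v (Atom p) = v p"
| "tval v (Imp A B) = (tval v A \<longrightarrow> tval v B)"

definition seq_true :: "('a \<Rightarrow> bool) \<Rightarrow> 'a form multiset \<Rightarrow> 'a form \<Rightarrow> bool" where
  "seq_true v \<Gamma> F = ((\<forall>E \<in># \<Gamma>. tval v E) \<longrightarrow> tval v F)"

definition tautological :: "'a form multiset \<Rightarrow> 'a form \<Rightarrow> bool" where
  "tautological \<Gamma> F = (\<forall>v. seq_true v \<Gamma> F)"

fun occ :: "'a \<Rightarrow> 'a form \<Rightarrow> nat" where
  "occ p (Atom q) = (if p = q then 1 else 0)"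
| "occ p (Imp A B) = occ p A + occ p B"

definition seq_occ :: "'a \<Rightarrow> 'a form multiset \<Rightarrow> 'a form \<Rightarrow> nat" where
  "seq_occ p \<Gamma> F = (\<Sum>E\<in>#\<Gamma>. occ p E) + occ p F"

definition binary :: "'a form multiset \<Rightarrow> 'a form \<Rightarrow> bool" where
  "binary \<Gamma> F = (\<forall>p. seq_occ p \<Gamma> F \<le> 2)"

fun atoms :: "'a form \<Rightarrow> 'a set" where
  "atoms (Atom p) = {p}"
| "atoms (Imp A B) = atoms A \<union> atoms B"

fun head :: "'a form \<Rightarrow> 'a" where
  "head (Atom p) = p"
| "head (Imp A B) = head B"

inductive relevant :: "'a form multiset \<Rightarrow> 'a form \<Rightarrow> 'a form \<Rightarrow> bool"
  for \<Gamma> :: "'a form multiset" and F :: "'a form" where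
  base: "G \<in># \<Gamma> \<Longrightarrow> head G \<in> atoms F \<Longrightarrow> relevant \<Gamma> F G"
| step: "G \<in># \<Gamma> \<Longrightarrow> relevant \<Gamma> F H \<Longrightarrow> head G \<in> atoms H \<Longrightarrow> relevant \<Gamma> F G"

definition relevant_part :: "'a form multiset \<Rightarrow> 'a form \<Rightarrow> 'a form multiset" where
  "relevant_part \<Gamma> F = filter_mset (relevant \<Gamma> F) \<Gamma>"

end

theory Submission
  imports Defs
begin

lemma head_true: "w (head G) \<Longrightarrow> tval w G"
  by (induction G) auto

lemma agree: "(\<forall>p\<in>atoms G. w p = v p) \<Longrightarrow> tval w G = tval v G"
  by (induction G) auto

lemma head_in_atoms: "head G \<in> atoms G"
  by (induction G) auto

lemma sum_filter_le: "(\<Sum>E\<in>#filter_mset P M. (f E::nat)) \<le> (\<Sum>E\<in>#M. f E)"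
  by (induction M) auto

theorem lemma4p1:
  fixes \<Gamma> :: "'a form multiset" and F :: "'a form"
  assumes "binary \<Gamma> F" and "tautological \<Gamma> F"
  shows "tautological (relevant_part \<Gamma> F) F \<and> binary (relevant_part \<Gamma> F) F"
proof
  show "binary (relevant_part \<Gamma> F) F"
    using assms(1) unfolding binary_def seq_occ_def relevant_part_def
    by (meson add_le_mono1 order_trans sum_filter_le)
next
  show "tautological (relevant_part \<Gamma> F) F"
    unfolding tautological_def seq_true_def
  proof (intro allI impI)
    fix v
    assume D: "\<forall>E\<in>#relevant_part \<Gamma> F. tval v E"
    define R where "R = atoms F \<union> \<Union>{atoms H | H. relevant \<Gamma> F H}"
    define w where "w p = (if p \<in> R then v p else True)" for p
    have Fw: "tval w F = tval v F"
      by (rule agree) (auto simp: w_def R_def)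
    have "\<forall>E\<in>#\<Gamma>. tval w E"
    proof
      fix E assume E: "E \<in># \<Gamma>"
      show "tval w E"
      proof (cases "relevant \<Gamma> F E")
        case True
        then have "tval v E" using D E by (simp add: relevant_part_def)
        moreover have "tval w E = tval v E"
          using True by (intro agree) (auto simp: w_def R_def)
        ultimately show ?thesis by simp
      next
        case False
        have "head E \<notin> R"
        proof
          assume "head E \<in> R"
          then show False unfolding R_def
            using False E relevant.base relevant.step by blast
        qed
        then show ?thesis by (intro head_true) (simp add: w_def)
      qed
    qed
    then have "tval w F" using assms(2) by (simp add: tautological_def seq_true_def)
    then show "tval v F" using Fw by simp
  qed
qed

end
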